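(* Let $k,l,m$ be positive integers, $n=(l+1)k$, and let $A\in\mathbb{R}^{m\times n}$ have $2k$-restricted isometry constant $\delta_{2k}$. Let $x\in\mathbb{R}^n$, $\epsilon\ge0$, $e\in\mathbb{R}^m$ with $\|e\|_2\le\epsilon$, $y=Ax+e$, let $p\in(0,1)$, let $x^{\star}$ be a solution of $\min_{\gamma}\|\gamma\|_p$ subject to $\|y-A\gamma\|_2\le\epsilon$, and let $h=x-x^{\star}$. Let $T_0=\{1,\dots,k\}$, $T_0^c=\{k+1,\dots,n\}$, and let $T_1,\dots,T_l$ be the partition of $T_0^c$ into consecutive blocks of size $k$ after ordering the indices of $T_0^c$ so that $|h_j|$ is non-increasing (so $T_1$ carries the $k$ largest entries of $h$ in magnitude on $T_0^c$, $T_2$ the next $k$, etc.). Let $t\in[0,1]$ satisfy $\|h_{T_1}\|_p^p=t\|h_{T_0^c}\|_p^p$. Then $$\Big\|\sum_{i=2}^lAh_{T_i}\Big\|_2^2\le C_1(t,p)k^{1-\frac2p}\|h_{T_0^c}\|_p^2,\qquad C_1(t,p)=\begin{cases}(1-t)t^{\frac2p-1}+2g(p)\delta_{2k}, & p\in(0,p^{\star}],\\ (1-t)t^{\frac2p-1}+2^{2-\frac2p}\delta_{2k}, & p\in(p^{\star},1).\end{cases}$$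
   Context: For $1\le s\le n$, the $s$-restricted isometry constant $\delta_s$ of $A$ is the smallest constant such that $(1-\delta_s)\|z\|_2^2\le\|Az\|_2^2\le(1+\delta_s)\|z\|_2^2$ for all $s$-sparse $z\in\mathbb{R}^n$. For $p\in(0,1)$, $\|\gamma\|_p=(\sum_i|\gamma_i|^p)^{1/p}$. For a vector $v$ and index set $T$, $v_T$ is the vector equal to $v$ on $T$ and zero elsewhere. $g(p)=\frac{p}{2}(1-\frac{p}{2})^{\frac{2}{p}-1}$. $p^{\star}\approx0.45418$ is the unique solution in $(0,1]$ of $(\frac{p}{2})^{1/2}(2-p)^{\frac1p-\frac12}=1$. *)

theory Defs
  imports Complex_Main
begin

text \<open>Vectors in R^n are functions nat => real of which only the coordinates
  0..n-1 matter (0-based indexing); an m x n matrix is nat => nat => real,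
  of which only entries (i,j) with i < m, j < n matter.\<close>

definition matvec :: "(nat \<Rightarrow> nat \<Rightarrow> real) \<Rightarrow> nat \<Rightarrow> (nat \<Rightarrow> real) \<Rightarrow> (nat \<Rightarrow> real)" where
  "matvec A n z = (\<lambda>i. \<Sum>j<n. A i j * z j)"

definition norm2sq :: "nat \<Rightarrow> (nat \<Rightarrow> real) \<Rightarrow> real" where
  "norm2sq d v = (\<Sum>i<d. (v i)^2)"

definition norm2 :: "nat \<Rightarrow> (nat \<Rightarrow> real) \<Rightarrow> real" where
  "norm2 d v = sqrt (norm2sq d v)"

definition pnorm :: "real \<Rightarrow> nat \<Rightarrow> (nat \<Rightarrow> real) \<Rightarrow> real" where
  "pnorm p d v = (\<Sum>i<d. \<bar>v i\<bar> powr p) powr (1 / p)"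

definition restr :: "nat set \<Rightarrow> (nat \<Rightarrow> real) \<Rightarrow> (nat \<Rightarrow> real)" where
  "restr T v = (\<lambda>i. if i \<in> T then v i else 0)"

definition sparse :: "nat \<Rightarrow> nat \<Rightarrow> (nat \<Rightarrow> real) \<Rightarrow> bool" where
  "sparse s n z \<longleftrightarrow> card {j. j < n \<and> z j \<noteq> 0} \<le> s"

definition ric :: "(nat \<Rightarrow> nat \<Rightarrow> real) \<Rightarrow> nat \<Rightarrow> nat \<Rightarrow> nat \<Rightarrow> real" where
  "ric A m n s = Inf {\<delta>. \<forall>z. sparse s n z \<longrightarrow>
       (1 - \<delta>) * norm2sq n z \<le> norm2sq m (matvec A n z) \<and>
       norm2sq m (matvec A n z) \<le> (1 + \<delta>) * norm2sq n z}"

definition gfun :: "real \<Rightarrow> real" where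
  "gfun p = p / 2 * (1 - p / 2) powr (2 / p - 1)"

definition pstar :: real where
  "pstar = (THE p. 0 < p \<and> p \<le> 1 \<and> (p / 2) powr (1/2) * (2 - p) powr (1 / p - 1/2) = 1)"

definition C1 :: "real \<Rightarrow> real \<Rightarrow> real \<Rightarrow> real" where
  "C1 \<delta> t p = (if p \<le> pstar
      then (1 - t) * t powr (2 / p - 1) + 2 * gfun p * \<delta>
      else (1 - t) * t powr (2 / p - 1) + 2 powr (2 - 2 / p) * \<delta>)"

end

theory Submission
  imports Defs "HOL-Analysis.Convex"
begin

lemma gmax:
  fixes p t :: real
  assumes "0 < p" "p < 1" "0 \<le> t" "t \<le> 1"
  shows "(1 - t) * t powr (2/p - 1) \<le> gfun p"
proof -
  have g0: "0 \<le> gfun p" using assms by (simp add: gfun_def)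
  show ?thesis
  proof (cases "t = 0 \<or> t = 1")
    case True then show ?thesis using g0 by auto
  next
    case False
    hence t: "0 < t" "t < 1" using assms by auto
    define a where "a = t / (1 - p/2)"
    define b where "b = (1 - t) / (p/2)"
    have a: "a > 0" and b: "b > 0" using t assms by (auto simp: a_def b_def)
    have "a powr (1 - p/2) * b powr (p/2) \<le> (1-p/2)*a + (p/2)*b"
      by (rule Youngs_inequality_0) (use assms a b in auto)
    also have "\<dots> = 1" using assms by (simp add: a_def b_def field_simps)
    finally have Y: "a powr (1 - p/2) * b powr (p/2) \<le> 1" .
    have "(a powr (1 - p/2) * b powr (p/2)) powr (2/p) \<le> 1 powr (2/p)"
      by (rule powr_mono2) (use Y assms a b in auto)
    also have "(a powr (1 - p/2) * b powr (p/2)) powr (2/p) = a powr ((1 - p/2)*(2/p)) * b powr ((p/2)*(2/p))"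
      using a b assms by (simp add: powr_mult powr_powr)
    finally have Z0: "a powr ((1 - p/2)*(2/p)) * b powr ((p/2)*(2/p)) \<le> 1" by simp
    have "(1 - p/2)*(2/p) = 2/p - 1" "(p/2)*(2/p) = 1" using assms by (auto simp: field_simps)
    with Z0 have Z: "a powr (2/p - 1) * b \<le> 1" using b by simp
    have "a powr (2/p - 1) = t powr (2/p-1) / (1-p/2) powr (2/p-1)"
      unfolding a_def using t assms by (simp add: powr_divide)
    moreover have cpos: "(1-p/2) powr (2/p-1) > 0" using assms by simp
    ultimately have "(t powr (2/p-1) / (1-p/2) powr (2/p-1)) * ((1 - t) / (p/2)) \<le> 1"
      using Z unfolding b_def by simp
    hence "t powr (2/p-1) * (1-t) \<le> (1-p/2) powr (2/p-1) * (p/2)"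
      using cpos assms by (simp add: divide_simps algebra_simps split: if_splits)
    thus ?thesis by (simp add: gfun_def mult.commute)
  qed
qed

definition Lf :: "real \<Rightarrow> real" where
  "Lf p = (1/2) * (ln p - ln 2) + (inverse p - 1/2) * ln (2 - p)"

lemma Lf_alt: "0 < p \<Longrightarrow> Lf p = ln (p/2) / 2 + (1/p - 1/2) * ln (2 - p)"
  by (simp add: Lf_def ln_div inverse_eq_divide)

lemma Lf_deriv:
  assumes "0 < x" "x < 2"
  shows "(Lf has_real_derivative (- ln (2 - x) / x^2)) (at x)"
  unfolding Lf_def
  apply (intro derivative_eq_intros)
  apply (use assms in simp_all)
  apply (use assms in \<open>simp add: field_simps power2_eq_square\<close>)
  done

lemma Lf_cont: "0 < a \<Longrightarrow> b < 2 \<Longrightarrow> continuous_on {a..b} Lf"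
  unfolding Lf_def by (intro continuous_intros) auto

lemma Lf_strict_dec:
  assumes "0 < a" "a < b" "b \<le> 1"
  shows "Lf b < Lf a"
proof (rule DERIV_neg_imp_decreasing_open[OF assms(2)])
  fix x assume x: "a < x" "x < b"
  show "\<exists>y. (Lf has_real_derivative y) (at x) \<and> y < 0"
  proof (intro exI conjI)
    show "(Lf has_real_derivative (- ln (2 - x) / x^2)) (at x)" using x assms by (intro Lf_deriv) auto
    have "ln (2 - x) > 0" using x assms by simp
    thus "- ln (2 - x) / x^2 < 0" using x assms by simp
  qed
next
  show "continuous_on {a..b} Lf" using assms by (intro Lf_cont) auto
qed

lemma Lf_dec: "0 < a \<Longrightarrow> a \<le> b \<Longrightarrow> b \<le> 1 \<Longrightarrow> Lf b \<le> Lf a"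
  using Lf_strict_dec by (cases "a = b") (auto intro: less_imp_le)

lemma Lf_1: "Lf 1 < 0"
  by (simp add: Lf_alt)

lemma Lf_quarter: "Lf (1/4) > 0"
proof -
  have "ln ((7/4::real)^7) > ln (8::real)"
    by (subst ln_less_cancel_iff) (auto simp: power_divide)
  hence A: "7 * ln (7/4::real) > 3 * ln 2"
    using ln_realpow[of "7/4::real" 7] ln_realpow[of "2::real" 3] by simp
  have B: "ln (1/8::real) = - 3 * ln 2"
    using ln_realpow[of "2::real" 3] by (simp add: ln_div)
  have "Lf (1/4) = ln (1/8) / 2 + (7/2) * ln (7/4)" by (simp add: Lf_alt)
  thus ?thesis using A B by simp
qed

lemma Lf_root: "\<exists>x. 1/4 \<le> x \<and> x \<le> 1 \<and> Lf x = 0"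
proof -
  have "\<exists>x\<ge>1/4. x \<le> 1 \<and> Lf x = 0"
    by (rule IVT2') (use Lf_1 Lf_quarter in \<open>auto intro!: Lf_cont\<close>)
  thus ?thesis by auto
qed

definition Phi :: "real \<Rightarrow> real" where
  "Phi p = (p / 2) powr (1/2) * (2 - p) powr (1 / p - 1/2)"

lemma Phi_exp: assumes "0 < p" "p < 2" shows "Phi p = exp (Lf p)"
proof -
  have "Phi p = exp ((1/2) * ln (p/2)) * exp ((1 / p - 1/2) * ln (2-p))"
    using assms by (simp add: Phi_def powr_def)
  also have "\<dots> = exp ((1/2) * ln (p/2) + (1 / p - 1/2) * ln (2-p))" by (simp add: exp_add)
  also have "(1/2) * ln (p/2) + (1 / p - 1/2) * ln (2-p) = Lf p" using assms by (simp add: Lf_alt)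
  finally show ?thesis .
qed

lemma pstar_props: "1/4 \<le> pstar \<and> pstar \<le> 1 \<and> Lf pstar = 0"
proof -
  obtain x where x: "1/4 \<le> x" "x \<le> 1" "Lf x = 0" using Lf_root by blast
  have "pstar = x"
    unfolding pstar_def
  proof (rule the_equality)
    show "0 < x \<and> x \<le> 1 \<and> (x / 2) powr (1/2) * (2 - x) powr (1 / x - 1/2) = 1"
      using x Phi_exp[of x] by (simp add: Phi_def)
  next
    fix y :: real assume y: "0 < y \<and> y \<le> 1 \<and> (y / 2) powr (1/2) * (2 - y) powr (1 / y - 1/2) = 1"
    hence "Lf y = 0" using Phi_exp[of y] by (simp add: Phi_def)
    show "y = x"
    proof (rule ccontr)
      assume "y \<noteq> x"
      hence "y < x \<or> x < y" by auto
      thus False using Lf_strict_dec[of y x] Lf_strict_dec[of x y] x y \<open>Lf y = 0\<close> by auto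
    qed
  qed
  thus ?thesis using x by simp
qed

lemma twog_eq:
  assumes "0 < p" "p < 1"
  shows "2 * gfun p = 2 powr (2 - 2/p) * exp (2 * Lf p)"
proof -
  have "exp (2 * Lf p) = exp (ln (p/2) + (2/p - 1) * ln (2-p))"
    using assms by (simp add: Lf_alt algebra_simps)
  also have "\<dots> = (p/2) * (2 - p) powr (2/p - 1)"
    using assms by (simp add: exp_add powr_def)
  finally have E: "exp (2 * Lf p) = (p/2) * (2 - p) powr (2/p - 1)" .
  have "1 - p/2 = (2-p)/2" by simp
  hence F: "(1 - p/2) powr (2/p - 1) = (2 - p) powr (2/p - 1) / 2 powr (2/p - 1)"
    using assms by (metis powr_divide le_less diff_gt_0_iff_gt less_trans one_less_numeral_iff semiring_norm(76) zero_le_numeral)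
  have "2 powr (2 - 2/p) * 2 powr (2/p - 1) = (2::real) powr ((2 - 2/p) + (2/p - 1))"
    by (rule powr_add[symmetric])
  also have "\<dots> = 2" by simp
  finally have G: "2 powr (2 - 2/p) * (1/2) = 1 / 2 powr (2/p - 1)"
    by (simp add: divide_simps)
  show ?thesis
    unfolding gfun_def F E using G by (simp add: field_simps)
qed

definition cst :: "real \<Rightarrow> real" where
  "cst p = (if p \<le> pstar then 2 * gfun p else 2 powr (2 - 2/p))"

lemma Vbound:
  fixes p t :: real
  assumes p: "0 < p" "p < 1" and t: "0 \<le> t" "t \<le> 1"
  shows "(1-t) * (t powr (2/p-1) + min t (1-t) powr (2/p-2) * (1-t)) \<le> cst p"
proof -
  define r where "r = (2::real) powr (2 - 2/p)"
  define e where "e = 2/p - 1"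
  have e1: "e > 1" using p by (simp add: e_def field_simps)
  have ee: "2/p - 2 = e - 1" by (simp add: e_def)
  have g0: "0 \<le> gfun p" using p by (simp add: gfun_def)
  have r0: "0 \<le> r" by (simp add: r_def)
  have half1: "(1/2::real) powr (e - 1) = r"
    unfolding r_def e_def by (simp add: powr_minus_divide[symmetric] powr_divide)
  have half2: "(1/4) * (1/2::real) powr (e - 1) = r / 4" using half1 by simp
  have V: "(1-t) * (t powr e + min t (1-t) powr (e-1) * (1-t)) \<le> max (gfun p + r/4) r"
  proof (cases "t \<ge> 1/2")
    case True
    hence m: "min t (1-t) = 1 - t" by auto
    have "(1-t) powr (e-1) \<le> (1/2) powr (e-1)"
      by (rule powr_mono2) (use True e1 t in auto)
    moreover have "(1-t)*(1-t) \<le> (1/2)*(1/2)" using True t by (intro mult_mono) auto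
    ultimately have "(1-t)*(1-t) * (1-t) powr (e-1) \<le> (1/4) * (1/2) powr (e-1)"
      using t by (intro mult_mono) auto
    moreover have "(1-t) * t powr e \<le> gfun p" using gmax[OF p t] by (simp add: e_def)
    ultimately have "(1-t) * (t powr e + min t (1-t) powr (e-1) * (1-t)) \<le> gfun p + r/4"
      unfolding m half2[symmetric] by (simp add: algebra_simps)
    thus ?thesis by simp
  next
    case False
    hence m: "min t (1-t) = t" by auto
    have te: "t powr e = t * t powr (e-1)"
    proof -
      have "t powr e = t powr (1 + (e-1))" by simp
      also have "\<dots> = t powr 1 * t powr (e-1)" by (rule powr_add)
      finally show ?thesis using t by simp
    qed
    have "(1-t) * (t powr e + min t (1-t) powr (e-1) * (1-t)) = (1-t) * t powr (e-1)"
      unfolding m te by (simp add: algebra_simps)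
    also have "\<dots> \<le> 1 * t powr (e-1)" using t by (intro mult_right_mono) auto
    also have "\<dots> \<le> (1/2) powr (e-1)"
      using False t e1 by (simp add: powr_mono2)
    finally show ?thesis using half1 by simp
  qed
  have rel: "2 * gfun p = r * exp (2 * Lf p)" using twog_eq[OF p] by (simp add: r_def)
  have ps: "1/4 \<le> pstar" "pstar \<le> 1" "Lf pstar = 0" using pstar_props by auto
  show ?thesis
  proof (cases "p \<le> pstar")
    case True
    have "Lf pstar \<le> Lf p" by (rule Lf_dec) (use True p ps in auto)
    hence "exp (2 * Lf p) \<ge> 1" using ps by simp
    hence "2 * gfun p \<ge> r" using rel r0 by (metis mult_left_mono mult.right_neutral)
    hence "max (gfun p + r/4) r \<le> 2 * gfun p" using g0 by auto
    from order_trans[OF V this] show ?thesis using True unfolding cst_def ee e_def by simp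
  next
    case False
    have "Lf p \<le> Lf pstar" by (rule Lf_dec) (use False p ps in auto)
    hence "exp (2 * Lf p) \<le> 1" using ps by simp
    hence "2 * gfun p \<le> r" using rel r0 by (metis mult_left_mono mult.right_neutral)
    hence "max (gfun p + r/4) r \<le> r" using g0 r0 by auto
    from order_trans[OF V this] show ?thesis using False unfolding cst_def ee e_def r_def by simp
  qed
qed

lemma sum_split2:
  fixes f :: "nat \<Rightarrow> real"
  assumes "1 \<le> l"
  shows "(\<Sum>i=1..l. f i) = f 1 + (\<Sum>i=2..l. f i)"
  using sum.atLeast_Suc_atMost[OF assms, of f] by (simp add: numeral_2_eq_2)

lemma massbound:
  fixes m b :: "nat \<Rightarrow> real" and l :: nat and k e t S :: real
  assumes e: "e > 1" and k: "k > 0" and t: "0 \<le> t" "t \<le> 1" and l: "1 \<le> l"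
    and m0: "\<And>i. i \<in> {1..l} \<Longrightarrow> 0 \<le> m i"
    and m1: "\<And>i. i \<in> {1..l} \<Longrightarrow> m i \<le> m 1"
    and mS: "(\<Sum>i=1..l. m i) = S" and mt: "m 1 = t * S"
    and b: "\<And>i. i \<in> {2..l} \<Longrightarrow> 0 \<le> b i \<and> (b i)^2 \<le> (m (i-1) / k) powr e * m i"
  shows "(\<Sum>i=2..l. (b i)^2) \<le> (1-t) * t powr e * (k powr (-e) * S powr (e+1))"
    and "(\<Sum>i=2..l. b i)^2 \<le> (1-t) * (t powr e + min t (1-t) powr (e-1) * (1-t)) * (k powr (-e) * S powr (e+1))"
proof -
  have S0: "0 \<le> S" using mS m0 by (metis sum_nonneg)
  have rest: "(\<Sum>i=2..l. m i) = (1-t) * S"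
    using sum_split2[OF l, of m] mS mt by (simp add: algebra_simps)
  have SS: "S powr e * S = S powr (e+1)"
    using S0 by (simp add: powr_add[of S e 1])
  have mle: "m (i-1) \<le> t * S" if "i \<in> {2..l}" for i
  proof -
    have "i-1 \<in> {1..l}" using that by auto
    thus ?thesis using m1[of "i-1"] mt by simp
  qed
  have mge: "0 \<le> m (i-1)" if "i \<in> {2..l}" for i
  proof -
    have "i-1 \<in> {1..l}" using that by auto
    thus ?thesis using m0[of "i-1"] by simp
  qed
  have kk: "(x / k) powr e = x powr e * k powr (-e)" if "0 \<le> x" for x
  proof -
    have "(x / k) powr e = x powr e / k powr e" using k that by (simp add: powr_divide)
    thus ?thesis by (simp add: powr_minus divide_inverse)
  qed
  have "(\<Sum>i=2..l. (b i)^2) \<le> (\<Sum>i=2..l. (t*S / k) powr e * m i)"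
  proof (rule sum_mono)
    fix i assume i: "i \<in> {2..l}"
    have "(m (i-1) / k) powr e \<le> (t*S / k) powr e"
      using mle[OF i] mge[OF i] k e by (intro powr_mono2) (auto intro: divide_right_mono)
    hence "(m (i-1) / k) powr e * m i \<le> (t*S / k) powr e * m i"
      using m0[of i] i by (intro mult_right_mono) auto
    thus "(b i)^2 \<le> (t*S / k) powr e * m i" using b[OF i] by linarith
  qed
  also have "\<dots> = (t*S / k) powr e * ((1-t) * S)" by (simp add: sum_distrib_left[symmetric] rest)
  also have "\<dots> = (1-t) * t powr e * (k powr (-e) * (S powr e * S))"
    using kk[of "t*S"] t S0 by (simp add: powr_mult)
  finally show "(\<Sum>i=2..l. (b i)^2) \<le> (1-t) * t powr e * (k powr (-e) * S powr (e+1))"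
    by (simp add: SS)
  define X where "X i = (m (i-1) / k) powr e" for i
  have X0: "0 \<le> X i" for i by (simp add: X_def)
  have "(\<Sum>i=2..l. b i) \<le> (\<Sum>i=2..l. sqrt (X i) * sqrt (m i))"
  proof (rule sum_mono)
    fix i assume i: "i \<in> {2..l}"
    have "b i \<le> sqrt (X i * m i)" using b[OF i] unfolding X_def by (intro real_le_rsqrt) auto
    thus "b i \<le> sqrt (X i) * sqrt (m i)" by (simp add: real_sqrt_mult)
  qed
  moreover have "0 \<le> (\<Sum>i=2..l. b i)" using b by (intro sum_nonneg) auto
  ultimately have "(\<Sum>i=2..l. b i)^2 \<le> (\<Sum>i=2..l. sqrt (X i) * sqrt (m i))^2"
    by (intro power_mono) auto
  also have "\<dots> \<le> (\<Sum>i=2..l. (sqrt (X i))^2) * (\<Sum>i=2..l. (sqrt (m i))^2)"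
    by (rule Cauchy_Schwarz_ineq_sum)
  also have "\<dots> = (\<Sum>i=2..l. X i) * ((1-t) * S)"
  proof -
    have "(\<Sum>i=2..l. (sqrt (X i))^2) = (\<Sum>i=2..l. X i)" using X0 by simp
    moreover have "(\<Sum>i=2..l. (sqrt (m i))^2) = (\<Sum>i=2..l. m i)"
      by (rule sum.cong) (use m0 in auto)
    ultimately show ?thesis using rest by simp
  qed
  finally have CS: "(\<Sum>i=2..l. b i)^2 \<le> (\<Sum>i=2..l. X i) * ((1-t) * S)" .
  define mu where "mu = min t (1-t) * S"
  have mu0: "0 \<le> mu" using t S0 by (simp add: mu_def)
  have sumX: "(\<Sum>i=2..l. X i) \<le> k powr (-e) * ((t*S) powr e + mu powr (e-1) * ((1-t)*S))"
  proof (cases "l = 1")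
    case True then show ?thesis using k t S0 mu0 by simp
  next
    case False
    hence l2: "2 \<le> l" using l by auto
    have split: "(\<Sum>i=2..l. X i) = X 2 + (\<Sum>i=3..l. X i)"
      using sum.atLeast_Suc_atMost[OF l2, of X] by (simp add: numeral_3_eq_3 numeral_2_eq_2)
    have X2: "X 2 = k powr (-e) * (t*S) powr e" unfolding X_def using mt kk[of "t*S"] t S0 by simp
    have "(\<Sum>i=3..l. X i) \<le> (\<Sum>i=3..l. k powr (-e) * (mu powr (e-1) * m (i-1)))"
    proof (rule sum_mono)
      fix i assume i: "i \<in> {3..l}"
      have i2: "i \<in> {2..l}" using i by auto
      have mm0: "0 \<le> m (i-1)" using mge[OF i2] .
      have mmu: "m (i-1) \<le> mu"
      proof -
        have a: "m (i-1) \<le> t * S" using mle[OF i2] .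
        have "m (i-1) \<le> (\<Sum>j=2..l. m j)"
          by (rule member_le_sum) (use i m0 in auto)
        hence "m (i-1) \<le> (1-t)*S" using rest by simp
        thus ?thesis using a unfolding mu_def by (simp add: min_mult_distrib_right S0)
      qed
      have "m (i-1) powr e = m (i-1) powr (1 + (e-1))" by simp
      also have "\<dots> = m (i-1) powr 1 * m (i-1) powr (e-1)" by (rule powr_add)
      also have "\<dots> = m (i-1) * m (i-1) powr (e-1)" using mm0 by simp
      also have "\<dots> \<le> m (i-1) * mu powr (e-1)"
        using mm0 mmu e by (intro mult_left_mono powr_mono2) auto
      finally have "m (i-1) powr e \<le> mu powr (e-1) * m (i-1)" by (simp add: mult.commute)
      thus "X i \<le> k powr (-e) * (mu powr (e-1) * m (i-1))"
        unfolding X_def kk[OF mm0] by (simp add: mult_left_mono mult.commute[of _ "k powr - e"])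
    qed
    also have "\<dots> = k powr (-e) * mu powr (e-1) * (\<Sum>i=3..l. m (i-1))"
      by (simp add: sum_distrib_left mult.assoc)
    also have "(\<Sum>i=3..l. m (i-1)) \<le> (1-t)*S"
    proof -
      have "(\<Sum>i=3..l. m (i-1)) = (\<Sum>j\<in>(\<lambda>i. i-1) ` {3..l}. m j)"
        by (subst sum.reindex) (auto simp: inj_on_def)
      also have "\<dots> \<le> (\<Sum>j=2..l. m j)"
        by (rule sum_mono2) (use m0 in auto)
      finally show ?thesis using rest by simp
    qed
    hence "k powr (-e) * mu powr (e-1) * (\<Sum>i=3..l. m (i-1)) \<le> k powr (-e) * mu powr (e-1) * ((1-t)*S)"
      by (intro mult_left_mono) auto
    finally show ?thesis unfolding split X2 by (simp add: algebra_simps)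
  qed
  have "(\<Sum>i=2..l. b i)^2 \<le> k powr (-e) * ((t*S) powr e + mu powr (e-1) * ((1-t)*S)) * ((1-t) * S)"
  proof -
    have "0 \<le> (1-t)*S" using t S0 by simp
    from mult_right_mono[OF sumX this] have "(\<Sum>i=2..l. X i) * ((1-t) * S) \<le> k powr (-e) * ((t*S) powr e + mu powr (e-1) * ((1-t)*S)) * ((1-t) * S)" .
    with CS show ?thesis by linarith
  qed
  also have "\<dots> = (1-t) * (t powr e * (S powr e * S) + min t (1-t) powr (e-1) * (1-t) * (S powr (e-1) * S * S)) * k powr (-e)"
    unfolding mu_def by (simp add: powr_mult algebra_simps)
  also have "S powr (e-1) * S = S powr e"
  proof -
    have "S powr e = S powr ((e-1) + 1)" by simp
    also have "\<dots> = S powr (e-1) * S powr 1" by (rule powr_add)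
    also have "\<dots> = S powr (e-1) * S" using S0 by simp
    finally show ?thesis by simp
  qed
  finally have F: "(\<Sum>i=2..l. b i)^2 \<le> (1-t) * (t powr e * (S powr e * S) + min t (1-t) powr (e-1) * (1-t) * (S powr e * S)) * k powr (-e)" .
  have "(1-t) * (t powr e * (S powr e * S) + min t (1-t) powr (e-1) * (1-t) * (S powr e * S)) * k powr (-e)
     = (1-t) * (t powr e + min t (1-t) powr (e-1) * (1-t)) * (k powr (-e) * (S powr e * S))"
    by (simp add: algebra_simps)
  with F show "(\<Sum>i=2..l. b i)^2 \<le> (1-t) * (t powr e + min t (1-t) powr (e-1) * (1-t)) * (k powr (-e) * S powr (e+1))"
    unfolding SS by simp
qed

definition ip :: "nat \<Rightarrow> (nat \<Rightarrow> real) \<Rightarrow> (nat \<Rightarrow> real) \<Rightarrow> real" where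
  "ip d u v = (\<Sum>i<d. u i * v i)"

definition RIP :: "(nat \<Rightarrow> nat \<Rightarrow> real) \<Rightarrow> nat \<Rightarrow> nat \<Rightarrow> nat \<Rightarrow> real \<Rightarrow> bool" where
  "RIP A m n s \<delta> \<longleftrightarrow> (\<forall>z. sparse s n z \<longrightarrow>
       (1 - \<delta>) * norm2sq n z \<le> norm2sq m (matvec A n z) \<and>
       norm2sq m (matvec A n z) \<le> (1 + \<delta>) * norm2sq n z)"

lemma norm2sq_nonneg: "0 \<le> norm2sq d v"
  by (simp add: norm2sq_def sum_nonneg)

lemma matvec_lin: "matvec A n (\<lambda>j. a * u j + b * v j) = (\<lambda>i. a * matvec A n u i + b * matvec A n v i)"
  by (simp add: matvec_def algebra_simps sum.distrib sum_distrib_left)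

lemma norm2sq_lin: "norm2sq d (\<lambda>i. a * U i + b * V i) = a^2 * norm2sq d U + 2*a*b * ip d U V + b^2 * norm2sq d V"
  by (simp add: norm2sq_def ip_def power2_eq_square algebra_simps sum.distrib sum_distrib_left)

lemma norm2sq_disj:
  assumes "\<And>j. u j * v j = 0"
  shows "norm2sq d (\<lambda>i. a * u i + b * v i) = a^2 * norm2sq d u + b^2 * norm2sq d v"
proof -
  have "ip d u v = 0" unfolding ip_def using assms by (simp del: mult_eq_0_iff)
  thus ?thesis by (simp add: norm2sq_lin)
qed

lemma ip_self: "ip d u u = norm2sq d u"
  by (simp add: ip_def norm2sq_def power2_eq_square)

lemma ip_CS: "(ip d u v)^2 \<le> norm2sq d u * norm2sq d v"
  unfolding ip_def norm2sq_def by (rule Cauchy_Schwarz_ineq_sum)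

lemma ric_props:
  assumes n: "n > 0" and s: "s > 0"
  shows "RIP A m n s (ric A m n s)" and "0 \<le> ric A m n s"
proof -
  define D where "D = {\<delta>. RIP A m n s \<delta>}"
  have ric_eq: "ric A m n s = Inf D" unfolding D_def ric_def RIP_def by simp
  define d0 where "d0 = (\<Sum>i<m. \<Sum>j<n. (A i j)^2) + 1"
  have d0D: "d0 \<in> D"
    unfolding D_def RIP_def
  proof (intro CollectI allI impI conjI)
    fix z :: "nat \<Rightarrow> real"
    have "norm2sq m (matvec A n z) = (\<Sum>i<m. (\<Sum>j<n. A i j * z j)^2)"
      by (simp add: norm2sq_def matvec_def)
    also have "\<dots> \<le> (\<Sum>i<m. (\<Sum>j<n. (A i j)^2) * (\<Sum>j<n. (z j)^2))"
      by (intro sum_mono Cauchy_Schwarz_ineq_sum)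
    also have "\<dots> = (d0 - 1) * norm2sq n z"
      unfolding d0_def norm2sq_def by (simp only: sum_distrib_right[symmetric] add_diff_cancel_right')
    finally have up: "norm2sq m (matvec A n z) \<le> (d0 - 1) * norm2sq n z" .
    have "0 \<le> (d0 - 1)" by (simp add: d0_def sum_nonneg)
    hence "0 \<le> (d0 - 1) * norm2sq n z" by (simp add: norm2sq_nonneg)
    thus "(1 + d0) * norm2sq n z \<ge> norm2sq m (matvec A n z)"
      using up norm2sq_nonneg[of n z] by (simp add: algebra_simps)
    show "(1 - d0) * norm2sq n z \<le> norm2sq m (matvec A n z)"
    proof -
      have "(1 - d0) * norm2sq n z \<le> 0"
        using \<open>0 \<le> d0 - 1\<close> norm2sq_nonneg[of n z] by (intro mult_nonpos_nonneg) auto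
      thus ?thesis using norm2sq_nonneg[of m "matvec A n z"] by linarith
    qed
  qed
  define e0 :: "nat \<Rightarrow> real" where "e0 = (\<lambda>j. if j = 0 then 1 else 0)"
  have e0s: "sparse s n e0"
  proof -
    have "{j. j < n \<and> e0 j \<noteq> 0} = {0}" using n by (auto simp: e0_def)
    thus ?thesis using s by (simp add: sparse_def)
  qed
  have e0n: "norm2sq n e0 = 1"
  proof -
    have "norm2sq n e0 = (\<Sum>j<n. if j = 0 then 1 else 0)"
      unfolding norm2sq_def e0_def by (rule sum.cong) auto
    also have "\<dots> = 1" using n by (simp add: sum.delta)
    finally show ?thesis .
  qed
  have Dge: "0 \<le> \<delta>" if "\<delta> \<in> D" for \<delta>
  proof -
    from that e0s have "(1 - \<delta>) * norm2sq n e0 \<le> norm2sq m (matvec A n e0) \<and>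
       norm2sq m (matvec A n e0) \<le> (1 + \<delta>) * norm2sq n e0" unfolding D_def RIP_def by blast
    thus ?thesis using e0n by simp
  qed
  have ne: "D \<noteq> {}" using d0D by auto
  have bdd: "bdd_below D" using Dge by (intro bdd_belowI[of _ 0]) auto
  show "0 \<le> ric A m n s" unfolding ric_eq using ne Dge by (intro cInf_greatest) auto
  show "RIP A m n s (ric A m n s)"
    unfolding RIP_def
  proof (intro allI impI conjI)
    fix z assume z: "sparse s n z"
    let ?N = "norm2sq n z" and ?M = "norm2sq m (matvec A n z)" and ?r = "ric A m n s"
    have N0: "0 \<le> ?N" by (rule norm2sq_nonneg)
    have ex: "\<exists>\<delta>\<in>D. \<delta> < ?r + \<epsilon> / (?N + 1)" if "\<epsilon> > 0" for \<epsilon>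
    proof -
      have "?r < ?r + \<epsilon> / (?N + 1)" using that N0 by simp
      thus ?thesis unfolding ric_eq using cInf_less_iff[OF ne bdd] by blast
    qed
    have bnd: "(\<delta> - ?r) * ?N \<le> \<epsilon>" if "\<delta> < ?r + \<epsilon> / (?N + 1)" "\<delta> \<in> D" "\<epsilon> > 0" for \<delta> \<epsilon>
    proof -
      have "?r \<le> \<delta>" unfolding ric_eq using that(2) bdd by (rule cInf_lower)
      have "(\<delta> - ?r) * ?N \<le> (\<epsilon> / (?N + 1)) * ?N"
        using that N0 by (intro mult_right_mono) auto
      also have "\<dots> \<le> \<epsilon>" using N0 that by (simp add: divide_simps)
      finally show ?thesis .
    qed
    show "(1 - ?r) * ?N \<le> ?M"
    proof (rule field_le_epsilon)
      fix \<epsilon> :: real assume "\<epsilon> > 0"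
      then obtain \<delta> where d: "\<delta> \<in> D" "\<delta> < ?r + \<epsilon> / (?N + 1)" using ex by blast
      have "(1 - \<delta>) * ?N \<le> ?M" using d(1) z unfolding D_def RIP_def by blast
      moreover have "(\<delta> - ?r) * ?N \<le> \<epsilon>" using bnd d \<open>\<epsilon> > 0\<close> by blast
      ultimately show "(1 - ?r) * ?N \<le> ?M + \<epsilon>" by (simp add: algebra_simps)
    qed
    show "?M \<le> (1 + ?r) * ?N"
    proof (rule field_le_epsilon)
      fix \<epsilon> :: real assume "\<epsilon> > 0"
      then obtain \<delta> where d: "\<delta> \<in> D" "\<delta> < ?r + \<epsilon> / (?N + 1)" using ex by blast
      have "?M \<le> (1 + \<delta>) * ?N" using d(1) z unfolding D_def RIP_def by blast
      moreover have "(\<delta> - ?r) * ?N \<le> \<epsilon>" using bnd d \<open>\<epsilon> > 0\<close> by blast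
      ultimately show "?M \<le> (1 + ?r) * ?N + \<epsilon>" by (simp add: algebra_simps)
    qed
  qed
qed

lemma cross:
  assumes R: "RIP A m n s \<delta>" and d0: "0 \<le> \<delta>"
    and sp: "\<And>a b. sparse s n (\<lambda>j. a * u j + b * v j)"
    and disj: "\<And>j. u j * v j = 0"
  shows "\<bar>ip m (matvec A n u) (matvec A n v)\<bar> \<le> \<delta> * sqrt (norm2sq n u) * sqrt (norm2sq n v)"
proof -
  define a where "a = sqrt (norm2sq n u)"
  define b where "b = sqrt (norm2sq n v)"
  have a2: "a^2 = norm2sq n u" unfolding a_def by (simp add: norm2sq_nonneg)
  have b2: "b^2 = norm2sq n v" unfolding b_def by (simp add: norm2sq_nonneg)
  have a0: "0 \<le> a" "0 \<le> b" by (auto simp: a_def b_def norm2sq_nonneg)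
  let ?I = "ip m (matvec A n u) (matvec A n v)"
  let ?U = "norm2sq m (matvec A n u)" and ?V = "norm2sq m (matvec A n v)"
  have key: "4*a*b*(c * ?I) \<le> 4*a*b*(\<delta>*a*b)" if c: "c = 1 \<or> c = -1" for c
  proof -
    let ?wp = "\<lambda>j. b * u j + (c*a) * v j" and ?wm = "\<lambda>j. b * u j + (-(c*a)) * v j"
    have c2: "c^2 = 1" using c by auto
    have Np: "norm2sq n ?wp = 2*a^2*b^2" using norm2sq_disj[of u v n b "c*a", OF disj] a2 b2 c2
      by (simp add: power_mult_distrib)
    have Nm: "norm2sq n ?wm = 2*a^2*b^2" using norm2sq_disj[of u v n b "-(c*a)", OF disj] a2 b2 c2
      by (simp add: power_mult_distrib)
    have Mp: "norm2sq m (matvec A n ?wp) = b^2 * ?U + 2*b*(c*a) * ?I + (c*a)^2 * ?V"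
      by (simp add: matvec_lin norm2sq_lin)
    have Mm: "norm2sq m (matvec A n ?wm) = b^2 * ?U - 2*b*(c*a) * ?I + (c*a)^2 * ?V"
      unfolding matvec_lin norm2sq_lin by simp
    have "norm2sq m (matvec A n ?wp) \<le> (1+\<delta>) * norm2sq n ?wp" using R sp unfolding RIP_def by blast
    moreover have "(1-\<delta>) * norm2sq n ?wm \<le> norm2sq m (matvec A n ?wm)" using R sp unfolding RIP_def by blast
    ultimately have "norm2sq m (matvec A n ?wp) - norm2sq m (matvec A n ?wm) \<le> (1+\<delta>) * (2*a^2*b^2) - (1-\<delta>)*(2*a^2*b^2)"
      unfolding Np Nm by linarith
    thus ?thesis unfolding Mp Mm by (simp add: algebra_simps power2_eq_square)
  qed
  show ?thesis
  proof (cases "a = 0 \<or> b = 0")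
    case True
    hence "?U * ?V = 0 \<or> True" by simp
    have "?U \<le> (1+\<delta>) * norm2sq n u" using R sp[of 1 0] unfolding RIP_def by simp
    moreover have "?V \<le> (1+\<delta>) * norm2sq n v" using R sp[of 0 1] unfolding RIP_def by simp
    ultimately have "?U * ?V \<le> 0" using True a2 b2 norm2sq_nonneg[of m "matvec A n u"] norm2sq_nonneg[of m "matvec A n v"]
      by (auto simp: mult_nonneg_nonneg)
    hence "?I^2 \<le> 0" using ip_CS[of m "matvec A n u" "matvec A n v"] by linarith
    hence "?I = 0" by simp
    thus ?thesis using a0 d0 unfolding a_def b_def by simp
  next
    case False
    hence pos: "0 < 4*a*b" using a0 by auto
    have "1 * ?I \<le> \<delta>*a*b" using mult_left_le_imp_le[OF key[of 1] pos] by simp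
    moreover have "(-1) * ?I \<le> \<delta>*a*b" using mult_left_le_imp_le[OF key[of "-1"] pos] by simp
    ultimately show ?thesis unfolding a_def b_def by simp
  qed
qed

lemma matvec_sum: "matvec A n (\<lambda>j. \<Sum>i\<in>I. V i j) = (\<lambda>r. \<Sum>i\<in>I. matvec A n (V i) r)"
  unfolding matvec_def by (simp add: sum_distrib_left) (rule ext, rule sum.swap)

lemma norm2sq_sum: "norm2sq d (\<lambda>r. \<Sum>i\<in>I. W i r) = (\<Sum>i\<in>I. \<Sum>i'\<in>I. ip d (W i) (W i'))"
proof -
  have "norm2sq d (\<lambda>r. \<Sum>i\<in>I. W i r) = (\<Sum>r<d. \<Sum>i\<in>I. \<Sum>i'\<in>I. W i r * W i' r)"
    unfolding norm2sq_def by (simp add: power2_eq_square sum_product)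
  also have "\<dots> = (\<Sum>i\<in>I. \<Sum>r<d. \<Sum>i'\<in>I. W i r * W i' r)" by (rule sum.swap)
  also have "\<dots> = (\<Sum>i\<in>I. \<Sum>i'\<in>I. \<Sum>r<d. W i r * W i' r)" by (simp add: sum.swap[of _ "{..<d}"])
  finally show ?thesis by (simp add: ip_def)
qed

lemma rip_sum:
  assumes R: "RIP A m n s \<delta>" and d0: "0 \<le> \<delta>" and fin: "finite I"
    and sp: "\<And>i i' a b. i \<in> I \<Longrightarrow> i' \<in> I \<Longrightarrow> sparse s n (\<lambda>j. a * V i j + b * V i' j)"
    and disj: "\<And>i i' j. i \<in> I \<Longrightarrow> i' \<in> I \<Longrightarrow> i \<noteq> i' \<Longrightarrow> V i j * V i' j = 0"
  shows "norm2sq m (matvec A n (\<lambda>j. \<Sum>i\<in>I. V i j))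
     \<le> (\<Sum>i\<in>I. norm2sq n (V i)) + \<delta> * (\<Sum>i\<in>I. sqrt (norm2sq n (V i)))^2"
proof -
  define a where "a i = sqrt (norm2sq n (V i))" for i
  have a2: "(a i)^2 = norm2sq n (V i)" for i unfolding a_def by (simp add: norm2sq_nonneg)
  define W where "W i = matvec A n (V i)" for i
  have "norm2sq m (matvec A n (\<lambda>j. \<Sum>i\<in>I. V i j)) = (\<Sum>i\<in>I. \<Sum>i'\<in>I. ip m (W i) (W i'))"
    unfolding matvec_sum W_def by (rule norm2sq_sum)
  also have "\<dots> \<le> (\<Sum>i\<in>I. \<Sum>i'\<in>I. (if i = i' then (a i)^2 else 0) + \<delta> * (a i * a i'))"
  proof (intro sum_mono)
    fix i i' assume i: "i \<in> I" and i': "i' \<in> I"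
    show "ip m (W i) (W i') \<le> (if i = i' then (a i)^2 else 0) + \<delta> * (a i * a i')"
    proof (cases "i = i'")
      case True
      have "sparse s n (\<lambda>j. 1 * V i j + 0 * V i j)" using sp i by blast
      hence "sparse s n (V i)" by simp
      hence "norm2sq m (W i) \<le> (1 + \<delta>) * norm2sq n (V i)" using R unfolding RIP_def W_def by blast
      thus ?thesis using True by (simp add: ip_self a2[symmetric] power2_eq_square algebra_simps)
    next
      case False
      have "\<bar>ip m (W i) (W i')\<bar> \<le> \<delta> * a i * a i'"
        unfolding W_def a_def by (rule cross[OF R d0]) (use sp i i' disj False in auto)
      thus ?thesis using False by (simp add: mult.assoc)
    qed
  qed
  also have "\<dots> = (\<Sum>i\<in>I. (a i)^2) + \<delta> * (\<Sum>i\<in>I. a i)^2"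
    using fin by (simp add: sum.distrib sum_distrib_left[symmetric] power2_eq_square sum_product)
  finally show ?thesis unfolding a2 by (simp add: a_def)
qed

lemma blocks:
  fixes \<sigma> :: "nat \<Rightarrow> nat" and k l :: nat and B :: "nat set"
  assumes bij: "bij_betw \<sigma> {..<l*k} B"
  shows "\<And>i. i \<in> {1..l} \<Longrightarrow> \<sigma> ` {(i-1)*k..<i*k} \<subseteq> B"
    and "\<And>i. i \<in> {1..l} \<Longrightarrow> card (\<sigma> ` {(i-1)*k..<i*k}) = k"
    and "\<And>i i'. i \<in> {1..l} \<Longrightarrow> i' \<in> {1..l} \<Longrightarrow> i \<noteq> i' \<Longrightarrow>
           \<sigma> ` {(i-1)*k..<i*k} \<inter> \<sigma> ` {(i'-1)*k..<i'*k} = {}"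
    and "(\<Union>i\<in>{1..l}. \<sigma> ` {(i-1)*k..<i*k}) = B"
proof -
  have inj: "inj_on \<sigma> {..<l*k}" and img: "\<sigma> ` {..<l*k} = B" using bij by (auto simp: bij_betw_def)
  have sub: "{(i-1)*k..<i*k} \<subseteq> {..<l*k}" if "i \<in> {1..l}" for i
  proof -
    have ik: "i*k \<le> l*k" using that by (intro mult_right_mono) auto
    show ?thesis
    proof
      fix x assume "x \<in> {(i-1)*k..<i*k}"
      hence "x < i*k" by simp
      thus "x \<in> {..<l*k}" using ik by (simp only: lessThan_iff)
    qed
  qed
  show "\<sigma> ` {(i-1)*k..<i*k} \<subseteq> B" if "i \<in> {1..l}" for i
    using sub[OF that] img by auto
  show "card (\<sigma> ` {(i-1)*k..<i*k}) = k" if "i \<in> {1..l}" for i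
  proof -
    have "card (\<sigma> ` {(i-1)*k..<i*k}) = card {(i-1)*k..<i*k}"
      by (rule card_image) (rule inj_on_subset[OF inj sub[OF that]])
    also have "\<dots> = i*k - (i-1)*k" by simp
    also have "\<dots> = k" using that by (cases i) (auto simp: algebra_simps)
    finally show ?thesis .
  qed
  show "\<sigma> ` {(i-1)*k..<i*k} \<inter> \<sigma> ` {(i'-1)*k..<i'*k} = {}"
    if i: "i \<in> {1..l}" and i': "i' \<in> {1..l}" and ne: "i \<noteq> i'" for i i'
  proof -
    have dis: "{(i-1)*k..<i*k} \<inter> {(i'-1)*k..<i'*k} = {}"
    proof (cases "i < i'")
      case True
      hence "i \<le> i' - 1" by auto
      hence "i*k \<le> (i'-1)*k" by (intro mult_right_mono) auto
      thus ?thesis by auto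
    next
      case False
      hence "i' \<le> i - 1" using ne by auto
      hence "i'*k \<le> (i-1)*k" by (intro mult_right_mono) auto
      thus ?thesis by auto
    qed
    have "\<sigma> ` ({(i-1)*k..<i*k} \<inter> {(i'-1)*k..<i'*k}) = \<sigma> ` {(i-1)*k..<i*k} \<inter> \<sigma> ` {(i'-1)*k..<i'*k}"
      by (rule inj_on_image_Int[OF inj sub[OF i] sub[OF i']])
    thus ?thesis unfolding dis by simp
  qed
  have U: "(\<Union>i\<in>{1..l}. {(i-1)*k..<i*k}) = {..<l*k}"
  proof
    show "(\<Union>i\<in>{1..l}. {(i-1)*k..<i*k}) \<subseteq> {..<l*k}" using sub by blast
    show "{..<l*k} \<subseteq> (\<Union>i\<in>{1..l}. {(i-1)*k..<i*k})"
    proof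
      fix a assume a: "a \<in> {..<l*k}"
      hence kp: "k > 0" by (cases k) auto
      define i where "i = a div k + 1"
      have "a div k < l" using a kp by (simp add: div_less_iff_less_mult)
      hence i1: "i \<in> {1..l}" by (auto simp: i_def)
      have dm: "a div k * k + a mod k = a" by (rule div_mult_mod_eq)
      have "a mod k < k" using kp by simp
      have "(i-1)*k \<le> a" using dm by (simp add: i_def)
      have ie: "i*k = a div k * k + k" by (simp add: i_def)
      have "a < i*k" unfolding ie using dm \<open>a mod k < k\<close> by linarith
      moreover note \<open>(i-1)*k \<le> a\<close>
      ultimately show "a \<in> (\<Union>i\<in>{1..l}. {(i-1)*k..<i*k})" using i1 by auto
    qed
  qed
  show "(\<Union>i\<in>{1..l}. \<sigma> ` {(i-1)*k..<i*k}) = B"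
    using U img by (metis image_UN)
qed

lemma sum_restr:
  fixes f :: "real \<Rightarrow> real"
  assumes "X \<subseteq> {..<n}" and "f 0 = 0"
  shows "(\<Sum>i<n. f (restr X h i)) = (\<Sum>i\<in>X. f (h i))"
proof -
  have "(\<Sum>i<n. f (restr X h i)) = (\<Sum>i<n. if i \<in> X then f (h i) else 0)"
    using assms(2) by (intro sum.cong) (auto simp: restr_def)
  also have "\<dots> = (\<Sum>i\<in>{..<n} \<inter> X. f (h i))" by (rule sum.inter_restrict[symmetric]) simp
  also have "{..<n} \<inter> X = X" using assms(1) by auto
  finally show ?thesis .
qed

lemma pnorm_restr:
  assumes "X \<subseteq> {..<n}" "0 < p"
  shows "pnorm p n (restr X h) = (\<Sum>i\<in>X. \<bar>h i\<bar> powr p) powr (1/p)"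
  unfolding pnorm_def using sum_restr[OF assms(1), of "\<lambda>x. \<bar>x\<bar> powr p" h] by simp

lemma norm2sq_restr:
  assumes "X \<subseteq> {..<n}"
  shows "norm2sq n (restr X h) = (\<Sum>i\<in>X. (h i)^2)"
  unfolding norm2sq_def using sum_restr[OF assms(1), of "\<lambda>x. x^2" h] by simp

theorem lemma7:
  fixes k l m n :: nat and A :: "nat \<Rightarrow> nat \<Rightarrow> real"
    and x e y xs h :: "nat \<Rightarrow> real" and \<epsilon> p t :: real
    and \<sigma> :: "nat \<Rightarrow> nat" and T :: "nat \<Rightarrow> nat set"
  assumes "k > 0" "l > 0" "m > 0" "n = (l + 1) * k"
    and "\<epsilon> \<ge> 0" "norm2 m e \<le> \<epsilon>"
    and "y = (\<lambda>i. matvec A n x i + e i)"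
    and "0 < p" "p < 1"
    and "norm2 m (\<lambda>i. y i - matvec A n xs i) \<le> \<epsilon>"
    and "\<forall>\<gamma>. norm2 m (\<lambda>i. y i - matvec A n \<gamma> i) \<le> \<epsilon> \<longrightarrow> pnorm p n xs \<le> pnorm p n \<gamma>"
    and "h = (\<lambda>i. x i - xs i)"
    and "bij_betw \<sigma> {..<n - k} {k..<n}"
    and "\<forall>i j. i \<le> j \<and> j < n - k \<longrightarrow> \<bar>h (\<sigma> j)\<bar> \<le> \<bar>h (\<sigma> i)\<bar>"
    and "T = (\<lambda>i. \<sigma> ` {(i - 1) * k ..< i * k})"
    and "0 \<le> t" "t \<le> 1"
    and "pnorm p n (restr (T 1) h) powr p = t * pnorm p n (restr {k..<n} h) powr p"
  shows "norm2sq m (matvec A n (\<lambda>j. \<Sum>i=2..l. restr (T i) h j))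
         \<le> C1 (ric A m n (2 * k)) t p * real k powr (1 - 2 / p) * (pnorm p n (restr {k..<n} h))^2"
proof -
  note kp = assms(1) and lp = assms(2) and nd = assms(4) and p0 = assms(8) and p1 = assms(9)
  note bij0 = assms(13) and mono = assms(14) and Tdef = assms(15) and t0 = assms(16) and t1 = assms(17)
  note tdef = assms(18)
  have nk: "n - k = l * k" using nd by simp
  have bij: "bij_betw \<sigma> {..<l*k} {k..<n}" using bij0 nk by simp
  note B = blocks[OF bij]
  have Tsub: "T i \<subseteq> {k..<n}" if "i \<in> {1..l}" for i using B(1)[OF that] Tdef by simp
  have Tsubn: "T i \<subseteq> {..<n}" if "i \<in> {1..l}" for i using Tsub[OF that] by auto
  have Tcard: "card (T i) = k" if "i \<in> {1..l}" for i using B(2)[OF that] Tdef by simp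
  have Tfin: "finite (T i)" for i using Tdef by simp
  have Tdisj: "T i \<inter> T i' = {}" if "i \<in> {1..l}" "i' \<in> {1..l}" "i \<noteq> i'" for i i'
    using B(3)[OF that] Tdef by simp
  have TU: "(\<Union>i\<in>{1..l}. T i) = {k..<n}" using B(4) Tdef by simp
  have ord: "\<bar>h j\<bar> \<le> \<bar>h j'\<bar>" if i: "i \<in> {2..l}" and j: "j \<in> T i" and j': "j' \<in> T (i-1)" for i j j'
  proof -
    obtain a where a: "a \<in> {(i-1)*k..<i*k}" "j = \<sigma> a" using j Tdef by auto
    obtain b where b: "b \<in> {(i-1-1)*k..<(i-1)*k}" "j' = \<sigma> b" using j' Tdef by auto
    have "b \<le> a" using a b by auto
    moreover have "a < l*k"
    proof -
      have "i*k \<le> l*k" using i by (intro mult_right_mono) auto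
      moreover have "a < i*k" using a(1) by simp
      ultimately show ?thesis by linarith
    qed
    ultimately show ?thesis using mono nk a b by auto
  qed
  define M where "M i = (\<Sum>j\<in>T i. \<bar>h j\<bar> powr p)" for i
  define S where "S = (\<Sum>j\<in>{k..<n}. \<bar>h j\<bar> powr p)"
  have M0: "0 \<le> M i" for i unfolding M_def by (intro sum_nonneg) simp
  have S0: "0 \<le> S" unfolding S_def by (intro sum_nonneg) simp
  have kM: "real k * \<bar>h j\<bar> powr p \<le> M (i-1)" if i: "i \<in> {2..l}" and j: "j \<in> T i" for i j
  proof -
    have i1: "i - 1 \<in> {1..l}" using i by auto
    have "real k * \<bar>h j\<bar> powr p = (\<Sum>j'\<in>T (i-1). \<bar>h j\<bar> powr p)" using Tcard[OF i1] by simp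
    also have "\<dots> \<le> M (i-1)" unfolding M_def
      by (intro sum_mono powr_mono2) (use p0 ord[OF i j] in auto)
    finally show ?thesis .
  qed
  have hle: "\<bar>h j\<bar> powr p \<le> M (i-1) / real k" if "i \<in> {2..l}" "j \<in> T i" for i j
    using kM[OF that] kp by (simp add: field_simps)
  have Mdec: "M i \<le> M (i-1)" if i: "i \<in> {2..l}" for i
  proof -
    have i1: "i \<in> {1..l}" using i by auto
    have "M i = (\<Sum>j\<in>T i. \<bar>h j\<bar> powr p)" by (simp add: M_def)
    also have "\<dots> \<le> (\<Sum>j\<in>T i. M (i-1) / real k)"
      by (rule sum_mono) (rule hle[OF i])
    also have "\<dots> = M (i-1)" using Tcard[OF i1] kp by simp
    finally show ?thesis .
  qed
  have Mle1: "i \<in> {1..l} \<longrightarrow> M i \<le> M 1" for i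
  proof (induction i)
    case 0 then show ?case by simp
  next
    case (Suc i)
    show ?case
    proof (cases "i = 0")
      case True then show ?thesis by simp
    next
      case False
      show ?thesis
      proof
        assume si: "Suc i \<in> {1..l}"
        hence "Suc i \<in> {2..l}" using False by auto
        hence "M (Suc i) \<le> M i" using Mdec by fastforce
        moreover have "M i \<le> M 1" using Suc.IH si False by auto
        ultimately show "M (Suc i) \<le> M 1" by simp
      qed
    qed
  qed
  have MS: "(\<Sum>i=1..l. M i) = S"
  proof -
    have "S = (\<Sum>j\<in>(\<Union>i\<in>{1..l}. T i). \<bar>h j\<bar> powr p)" unfolding S_def TU ..
    also have "\<dots> = (\<Sum>i=1..l. \<Sum>j\<in>T i. \<bar>h j\<bar> powr p)"
      by (rule sum.UNION_disjoint) (use Tfin Tdisj in auto)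
    finally show ?thesis unfolding M_def by simp
  qed
  have pS: "pnorm p n (restr {k..<n} h) = S powr (1/p)"
    unfolding S_def by (rule pnorm_restr) (use p0 in auto)
  have p1M: "pnorm p n (restr (T 1) h) powr p = M 1"
  proof -
    have "pnorm p n (restr (T 1) h) = M 1 powr (1/p)"
      unfolding M_def by (rule pnorm_restr) (use p0 Tsubn[of 1] lp in auto)
    thus ?thesis using p0 M0[of 1] by (simp add: powr_powr)
  qed
  have pSp: "pnorm p n (restr {k..<n} h) powr p = S"
    using pS p0 S0 by (simp add: powr_powr)
  have Mt: "M 1 = t * S" using tdef p1M pSp by simp
  define e where "e = 2/p - 1"
  have e1: "e > 1" using p0 p1 by (simp add: e_def field_simps)
  define b where "b i = sqrt (norm2sq n (restr (T i) h))" for i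
  have bprop: "0 \<le> b i \<and> (b i)^2 \<le> (M (i-1) / real k) powr e * M i" if i: "i \<in> {2..l}" for i
  proof -
    have i1: "i \<in> {1..l}" using i by auto
    have b2: "(b i)^2 = (\<Sum>j\<in>T i. (h j)^2)"
    proof -
      have "(b i)^2 = norm2sq n (restr (T i) h)" by (simp add: b_def norm2sq_nonneg)
      also have "\<dots> = (\<Sum>j\<in>T i. (h j)^2)" by (rule norm2sq_restr[OF Tsubn[OF i1]])
      finally show ?thesis .
    qed
    have "(\<Sum>j\<in>T i. (h j)^2) \<le> (\<Sum>j\<in>T i. (M (i-1) / real k) powr e * \<bar>h j\<bar> powr p)"
    proof (intro sum_mono)
      fix j assume j: "j \<in> T i"
      have "(h j)^2 = \<bar>h j\<bar> powr 2"
        by (cases "h j = 0") (auto simp: powr_realpow[symmetric])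
      also have "\<dots> = \<bar>h j\<bar> powr (p + p * e)" using p0 by (simp add: e_def field_simps)
      also have "\<dots> = \<bar>h j\<bar> powr p * (\<bar>h j\<bar> powr p) powr e" by (simp add: powr_add powr_powr)
      also have "\<dots> \<le> \<bar>h j\<bar> powr p * (M (i-1) / real k) powr e"
        using hle[OF i j] e1 by (intro mult_left_mono powr_mono2) auto
      finally show "(h j)^2 \<le> (M (i-1) / real k) powr e * \<bar>h j\<bar> powr p" by (simp add: mult.commute)
    qed
    also have "\<dots> = (M (i-1) / real k) powr e * M i" unfolding M_def by (simp add: sum_distrib_left)
    finally have "(b i)^2 \<le> (M (i-1) / real k) powr e * M i" using b2 by simp
    moreover have "0 \<le> b i" by (simp add: b_def norm2sq_nonneg)
    ultimately show ?thesis by simp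
  qed
  have kr: "real k > 0" using kp by simp
  have l1: "1 \<le> l" using lp by simp
  note MB = massbound[OF e1 kr t0 t1 l1 _ _ MS Mt bprop]
  have MB1: "(\<Sum>i=2..l. (b i)^2) \<le> (1-t) * t powr e * (real k powr (-e) * S powr (e+1))"
    by (rule MB(1)) (use M0 Mle1 in auto)
  have MB2: "(\<Sum>i=2..l. b i)^2 \<le> (1-t) * (t powr e + min t (1-t) powr (e-1) * (1-t)) * (real k powr (-e) * S powr (e+1))"
    by (rule MB(2)) (use M0 Mle1 in auto)
  define K where "K = real k powr (-e) * S powr (e+1)"
  have K0: "0 \<le> K" by (simp add: K_def)
  have Vb: "(1-t) * (t powr e + min t (1-t) powr (e-1) * (1-t)) \<le> cst p"
    using Vbound[OF p0 p1 t0 t1] by (simp add: e_def)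
  have MB2': "(\<Sum>i=2..l. b i)^2 \<le> cst p * K"
    using order_trans[OF MB2[folded K_def] mult_right_mono[OF Vb K0]] .
  define \<delta> where "\<delta> = ric A m n (2*k)"
  have n0: "n > 0" using nd kp by simp
  have R: "RIP A m n (2*k) \<delta>" and d0: "0 \<le> \<delta>" unfolding \<delta>_def using ric_props[OF n0, of "2*k" A m] kp by auto
  have rip: "norm2sq m (matvec A n (\<lambda>j. \<Sum>i\<in>{2..l}. restr (T i) h j))
     \<le> (\<Sum>i\<in>{2..l}. norm2sq n (restr (T i) h)) + \<delta> * (\<Sum>i\<in>{2..l}. sqrt (norm2sq n (restr (T i) h)))^2"
  proof (rule rip_sum[OF R d0])
    fix i i' :: nat and a c :: real assume i: "i \<in> {2..l}" and i': "i' \<in> {2..l}"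
    have i1: "i \<in> {1..l}" and i1': "i' \<in> {1..l}" using i i' by auto
    have "{j. j < n \<and> a * restr (T i) h j + c * restr (T i') h j \<noteq> 0} \<subseteq> T i \<union> T i'"
      by (auto simp: restr_def)
    hence "card {j. j < n \<and> a * restr (T i) h j + c * restr (T i') h j \<noteq> 0} \<le> card (T i \<union> T i')"
      by (rule card_mono[rotated]) (simp add: Tfin)
    also have "\<dots> \<le> card (T i) + card (T i')" by (rule card_Un_le)
    also have "\<dots> = 2*k" using Tcard[OF i1] Tcard[OF i1'] by simp
    finally show "sparse (2*k) n (\<lambda>j. a * restr (T i) h j + c * restr (T i') h j)"
      unfolding sparse_def .
  next
    fix i i' j assume i: "i \<in> {2..l}" and i': "i' \<in> {2..l}" and ne: "i \<noteq> i'"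
    have "T i \<inter> T i' = {}" using Tdisj[of i i'] i i' ne by auto
    thus "restr (T i) h j * restr (T i') h j = 0" by (auto simp: restr_def)
  qed simp
  have bsq: "norm2sq n (restr (T i) h) = (b i)^2" for i unfolding b_def by (simp add: norm2sq_nonneg)
  have lhs: "norm2sq m (matvec A n (\<lambda>j. \<Sum>i=2..l. restr (T i) h j)) \<le> (\<Sum>i=2..l. (b i)^2) + \<delta> * (\<Sum>i=2..l. b i)^2"
    using rip unfolding b_def[symmetric] unfolding bsq by simp
  also have "\<dots> \<le> (1-t) * t powr e * K + \<delta> * (cst p * K)"
    using MB1[folded K_def] MB2' d0 by (intro add_mono mult_left_mono) auto
  also have "\<dots> = C1 \<delta> t p * real k powr (1 - 2 / p) * (pnorm p n (restr {k..<n} h))^2"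
  proof -
    have P2: "(pnorm p n (restr {k..<n} h))^2 = S powr (e+1)"
    proof -
      have "(S powr (1/p))^2 = S powr (1/p) * S powr (1/p)" by (simp add: power2_eq_square)
      also have "\<dots> = S powr (1/p + 1/p)" by (rule powr_add[symmetric])
      also have "1/p + 1/p = e + 1" by (simp add: e_def)
      finally show ?thesis using pS by simp
    qed
    have KK: "real k powr (1 - 2/p) = real k powr (-e)" by (simp add: e_def)
    have CC: "C1 \<delta> t p = (1-t) * t powr e + cst p * \<delta>"
      by (simp add: C1_def cst_def e_def)
    show ?thesis unfolding P2 KK CC K_def by (simp add: algebra_simps)
  qed
  finally show ?thesis unfolding \<delta>_def .
qed

end
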